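(* $X=\mathrm{Cay}(\mathfrak{a},\mathfrak{c},\mathfrak{d})$; consequently $\{\mathfrak{a},\mathfrak{c},\mathfrak{d}\}$ is Wilf-equivalent over Cayley permutations to the pattern $11$, i.e. $|\mathrm{Cay}_n(\mathfrak{a},\mathfrak{c},\mathfrak{d})|=|\mathrm{Cay}_n(11)|=n!$ for all $n$.
   Context: A Cayley permutation of length $n$ is a word $x=x(1)\cdots x(n)$ of positive integers in which every integer from $1$ to $\max(x)$ occurs; $\mathrm{Cay}_n$ is the set of these. $\mathrm{Cay}_n(11)$ is the set of permutations of $[n]$. Mesh patterns (for $x\in\mathrm{Cay}_n$): $x$ contains $\mathfrak{a}$ if there are indices $i<j<n$ with $x(j)<x(i)=x(j+1)$. $x$ contains $\mathfrak{c}$ if there are indices $i<j<n$ with $x(j+1)<x(i)<x(j)$ such that no entry of $x$ has value strictly between $x(j+1)$ and $x(i)$, no index $m\le j$ has $x(m)=x(j+1)$, and no index $m>j+1$ has $x(m)=x(i)$. $x$ contains $\mathfrak{d}$ if there is an index $i<n$ with $x(i+1)<x(i)$ such that no entry of $x$ has value strictly between $x(i+1)$ and $x(i)$, no index $m<i$ has $x(m)=x(i+1)$, and no index $m>i+1$ has $x(m)=x(i)$. $\mathrm{Cay}(\mathfrak{a},\mathfrak{c},\mathfrak{d})$ is the set of Cayley permutations containing none of them. The map $\eta$: for a permutation $\pi$ of $[n]$ and $i\in[n]$, let $J(i)=0$ if $\pi(i)=1$ and otherwise $J(i)$ is the index with $\pi(J(i))=\pi(i)-1$. The site before $\pi(1)$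 is $\eta$-active; the site after $\pi(i)$ is $\eta$-active iff $J(i)<i$, or $i<n$ and $\pi(i)<\pi(i+1)$. Let $\tilde\upsilon(\pi)(j)$ be the number of $\eta$-active sites to the left of $\pi(j)$. Then $\eta(\pi)$ is the word with $\eta(\pi)(\pi(j))=\tilde\upsilon(\pi)(j)$ for all $j$. $X=\{\eta(\pi):\pi \text{ a permutation}\}$. *)

theory Defs
  imports Main
begin

text \<open>Words are lists of naturals. The paper's 1-based index k corresponds
to list position k-1; we use the accessor w1 x k = x ! (k - 1).\<close>

definition w1 :: "nat list \<Rightarrow> nat \<Rightarrow> nat" where
  "w1 x k = x ! (k - 1)"

definition cayley :: "nat list \<Rightarrow> bool" where
  "cayley x \<longleftrightarrow> (\<exists>k. set x = {1..k})"

definition Cay :: "nat \<Rightarrow> nat list set" where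
  "Cay n = {x. cayley x \<and> length x = n}"

definition contains_11 :: "nat list \<Rightarrow> bool" where
  "contains_11 x \<longleftrightarrow> (\<exists>i j. 1 \<le> i \<and> i < j \<and> j \<le> length x \<and> w1 x i = w1 x j)"

definition contains_a :: "nat list \<Rightarrow> bool" where
  "contains_a x \<longleftrightarrow> (\<exists>i j. 1 \<le> i \<and> i < j \<and> j < length x \<and>
      w1 x j < w1 x i \<and> w1 x i = w1 x (j+1))"

definition contains_c :: "nat list \<Rightarrow> bool" where
  "contains_c x \<longleftrightarrow> (\<exists>i j. 1 \<le> i \<and> i < j \<and> j < length x \<and>
      w1 x (j+1) < w1 x i \<and> w1 x i < w1 x j \<and>
      (\<forall>m. 1 \<le> m \<and> m \<le> length x \<longrightarrow> \<not> (w1 x (j+1) < w1 x m \<and> w1 x m < w1 x i)) \<and>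
      (\<forall>m. 1 \<le> m \<and> m \<le> j \<longrightarrow> w1 x m \<noteq> w1 x (j+1)) \<and>
      (\<forall>m. j+1 < m \<and> m \<le> length x \<longrightarrow> w1 x m \<noteq> w1 x i))"

definition contains_d :: "nat list \<Rightarrow> bool" where
  "contains_d x \<longleftrightarrow> (\<exists>i. 1 \<le> i \<and> i < length x \<and>
      w1 x (i+1) < w1 x i \<and>
      (\<forall>m. 1 \<le> m \<and> m \<le> length x \<longrightarrow> \<not> (w1 x (i+1) < w1 x m \<and> w1 x m < w1 x i)) \<and>
      (\<forall>m. 1 \<le> m \<and> m < i \<longrightarrow> w1 x m \<noteq> w1 x (i+1)) \<and>
      (\<forall>m. i+1 < m \<and> m \<le> length x \<longrightarrow> w1 x m \<noteq> w1 x i))"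

definition Cay_acd :: "nat list set" where
  "Cay_acd = {x. cayley x \<and> \<not> contains_a x \<and> \<not> contains_c x \<and> \<not> contains_d x}"

definition Cay_n_acd :: "nat \<Rightarrow> nat list set" where
  "Cay_n_acd n = {x \<in> Cay n. \<not> contains_a x \<and> \<not> contains_c x \<and> \<not> contains_d x}"

definition Cay_n_11 :: "nat \<Rightarrow> nat list set" where
  "Cay_n_11 n = {x \<in> Cay n. \<not> contains_11 x}"

definition is_perm :: "nat list \<Rightarrow> bool" where
  "is_perm p \<longleftrightarrow> distinct p \<and> set p = {1..length p}"

definition etaJ :: "nat list \<Rightarrow> nat \<Rightarrow> nat" where
  "etaJ p i = (if w1 p i = 1 then 0
               else (THE k. 1 \<le> k \<and> k \<le> length p \<and> w1 p k = w1 p i - 1))"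

text \<open>Site s (0 \<le> s \<le> n) is the site after p(s); site 0 is the site before p(1).\<close>
definition eta_active :: "nat list \<Rightarrow> nat \<Rightarrow> bool" where
  "eta_active p s \<longleftrightarrow> s = 0 \<or>
     (1 \<le> s \<and> s \<le> length p \<and>
       (etaJ p s < s \<or> (s < length p \<and> w1 p s < w1 p (s+1))))"

definition upsilon :: "nat list \<Rightarrow> nat \<Rightarrow> nat" where
  "upsilon p j = card {s. s < j \<and> eta_active p s}"

text \<open>eta(p)(p(j)) = upsilon(p)(j): the entry at (1-based) position v is
upsilon at the index j with p(j) = v.\<close>
definition eta :: "nat list \<Rightarrow> nat list" where
  "eta p = map (\<lambda>v. upsilon p (THE j. 1 \<le> j \<and> j \<le> length p \<and> w1 p j = v))
                 [1..<length p + 1]"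

definition X :: "nat list set" where
  "X = {eta p | p. is_perm p}"

end

theory Submission
  imports Defs "HOL-Combinatorics.Multiset_Permutations"
begin


definition pos :: "nat list \<Rightarrow> nat \<Rightarrow> nat" where
  "pos p v = (THE j. 1 \<le> j \<and> j \<le> length p \<and> w1 p j = v)"

lemma perm_w1_range: "is_perm p \<Longrightarrow> 1 \<le> j \<Longrightarrow> j \<le> length p \<Longrightarrow> 1 \<le> w1 p j \<and> w1 p j \<le> length p"
proof -
  assume a: "is_perm p" "1 \<le> j" "j \<le> length p"
  hence "p ! (j-1) \<in> set p" by simp
  thus ?thesis using a unfolding is_perm_def w1_def by auto
qed

lemma perm_w1_inj: "is_perm p \<Longrightarrow> 1 \<le> i \<Longrightarrow> i \<le> length p \<Longrightarrow> 1 \<le> j \<Longrightarrow> j \<le> length p \<Longrightarrow> w1 p i = w1 p j \<Longrightarrow> i = j"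
  unfolding is_perm_def w1_def using nth_eq_iff_index_eq[of p "i-1" "j-1"] by (metis One_nat_def Suc_le_eq Suc_pred le_less_trans)

lemma perm_w1_surj: "is_perm p \<Longrightarrow> 1 \<le> v \<Longrightarrow> v \<le> length p \<Longrightarrow> \<exists>j. 1 \<le> j \<and> j \<le> length p \<and> w1 p j = v"
proof -
  assume a: "is_perm p" "1 \<le> v" "v \<le> length p"
  hence "v \<in> set p" unfolding is_perm_def by auto
  then obtain k where "k < length p" "p ! k = v" by (auto simp: in_set_conv_nth)
  thus ?thesis by (intro exI[of _ "Suc k"]) (auto simp: w1_def)
qed

lemma pos_w1: "is_perm p \<Longrightarrow> 1 \<le> j \<Longrightarrow> j \<le> length p \<Longrightarrow> pos p (w1 p j) = j"
  unfolding pos_def by (rule the_equality) (auto dest: perm_w1_inj)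

lemma pos_props: "is_perm p \<Longrightarrow> 1 \<le> v \<Longrightarrow> v \<le> length p \<Longrightarrow> 1 \<le> pos p v \<and> pos p v \<le> length p \<and> w1 p (pos p v) = v"
  using perm_w1_surj[of p v] pos_w1[of p] by force

lemma etaJ_eq: "etaJ p s = (if w1 p s = 1 then 0 else pos p (w1 p s - 1))"
  unfolding etaJ_def pos_def by simp

lemma ups_Suc: "upsilon p (Suc j) = upsilon p j + (if eta_active p j then 1 else 0)"
proof -
  have f: "finite {s. s < j \<and> eta_active p s}" by simp
  have "{s. s < Suc j \<and> eta_active p s} = (if eta_active p j then insert j {s. s < j \<and> eta_active p s} else {s. s < j \<and> eta_active p s})"
    by (auto simp: less_Suc_eq)
  thus ?thesis unfolding upsilon_def using f by auto
qed

lemma ups_0: "upsilon p 0 = 0" unfolding upsilon_def by simp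
lemma ups_1: "upsilon p 1 = 1" using ups_Suc[of p 0] by (simp add: ups_0 eta_active_def)

lemma ups_mono: "i \<le> j \<Longrightarrow> upsilon p i \<le> upsilon p j"
  unfolding upsilon_def by (rule card_mono) auto

lemma ups_step: "upsilon p j \<le> upsilon p (Suc j) \<and> upsilon p (Suc j) \<le> Suc (upsilon p j)"
  using ups_Suc[of p j] by auto

lemma length_eta[simp]: "length (eta p) = length p"
  unfolding eta_def by (simp del: upt_Suc)

lemma eta_w1v: "1 \<le> v \<Longrightarrow> v \<le> length p \<Longrightarrow> w1 (eta p) v = upsilon p (pos p v)"
proof -
  assume a: "1 \<le> v" "v \<le> length p"
  have e: "[1..<length p + 1] ! (v-1) = v" using a by (subst nth_upt) auto
  show ?thesis unfolding eta_def w1_def pos_def using a e by (simp del: upt_Suc)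
qed

lemma eta_w1: "is_perm p \<Longrightarrow> 1 \<le> j \<Longrightarrow> j \<le> length p \<Longrightarrow> w1 (eta p) (w1 p j) = upsilon p j"
  using eta_w1v[of "w1 p j" p] perm_w1_range[of p j] pos_w1[of p j] by simp

lemma inactive:
  assumes "is_perm p" "1 \<le> s" "s < length p" "upsilon p s = upsilon p (Suc s)"
  shows "w1 p (Suc s) < w1 p s \<and> w1 p s \<noteq> 1 \<and> s < pos p (w1 p s - 1)"
proof -
  have na: "\<not> eta_active p s" using ups_Suc[of p s] assms by auto
  hence 1: "\<not> etaJ p s < s" and 2: "\<not> w1 p s < w1 p (s+1)" using assms unfolding eta_active_def by auto
  have "w1 p s \<noteq> w1 p (Suc s)" using perm_w1_inj[of p s "Suc s"] assms by auto
  hence 3: "w1 p (Suc s) < w1 p s" using 2 by auto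
  have 4: "w1 p s \<noteq> 1" using 1 assms by (auto simp: etaJ_eq)
  have r: "1 \<le> w1 p s \<and> w1 p s \<le> length p" using perm_w1_range[of p s] assms by auto
  have r2: "1 \<le> w1 p s - 1" using r 4 by arith
  have "w1 p s - 1 \<le> length p" using r by arith
  hence "w1 p (pos p (w1 p s - 1)) = w1 p s - 1" using pos_props[of p "w1 p s - 1"] r2 assms(1) by blast
  hence "pos p (w1 p s - 1) \<noteq> s" using r2 by auto
  thus ?thesis using 1 3 4 by (auto simp: etaJ_eq)
qed

lemma block_dec:
  assumes "is_perm p" "1 \<le> s" "s < t" "t \<le> length p" "upsilon p s = upsilon p t"
  shows "w1 p t < w1 p s"
  using assms(3-5)
proof (induction t)
  case 0 then show ?case by simp
next
  case (Suc t)
  have m1: "upsilon p s \<le> upsilon p t" "upsilon p t \<le> upsilon p (Suc t)" using Suc.prems ups_mono[of s t p] ups_mono[of t "Suc t" p] by auto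
  hence e: "upsilon p t = upsilon p (Suc t)" "upsilon p s = upsilon p t" using Suc.prems by auto
  have st: "w1 p (Suc t) < w1 p t" using inactive[of p t] e assms Suc.prems by auto
  show ?case
  proof (cases "s < t")
    case True then show ?thesis using Suc.IH Suc.prems e st by auto
  next
    case False then have "s = t" using Suc.prems by auto
    then show ?thesis using st by simp
  qed
qed



lemma not_a_eta: assumes pp: "is_perm p" shows "\<not> contains_a (eta p)"
proof
  assume "contains_a (eta p)"
  then obtain i j where ij: "1 \<le> i" "i < j" "j < length p" "w1 (eta p) j < w1 (eta p) i" "w1 (eta p) i = w1 (eta p) (j+1)"
    unfolding contains_a_def by auto
  define Pi where "Pi = pos p i"
  define Pj where "Pj = pos p j"
  define Pk where "Pk = pos p (j+1)"
  have pi: "1 \<le> Pi \<and> Pi \<le> length p \<and> w1 p Pi = i" using pos_props[of p i] pp ij unfolding Pi_def by auto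
  have pj: "1 \<le> Pj \<and> Pj \<le> length p \<and> w1 p Pj = j" using pos_props[of p j] pp ij unfolding Pj_def by auto
  have pk: "1 \<le> Pk \<and> Pk \<le> length p \<and> w1 p Pk = j+1" using pos_props[of p "j+1"] pp ij unfolding Pk_def by auto
  have f: "upsilon p Pj < upsilon p Pi" "upsilon p Pi = upsilon p Pk"
    using ij eta_w1v[of i p] eta_w1v[of j p] eta_w1v[of "j+1" p] unfolding Pi_def Pj_def Pk_def by auto
  have "Pj < Pk" using f ups_mono[of Pk Pj p] by (cases "Pj < Pk") auto
  have "Pk \<noteq> Pi" using pi pk ij by auto
  show False
  proof (cases "Pk < Pi")
    case True
    have "upsilon p Pk = upsilon p (Suc Pk)" using ups_mono[of "Suc Pk" Pi p] ups_step[of p Pk] f True by auto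
    hence "Pk < pos p (w1 p Pk - 1)" using inactive[of p Pk] pp pk True pi by auto
    hence "Pk < Pj" using pk unfolding Pj_def by simp
    thus False using \<open>Pj < Pk\<close> by simp
  next
    case False
    hence "Pi < Pk" using \<open>Pk \<noteq> Pi\<close> by simp
    hence "w1 p Pk < w1 p Pi" using block_dec[of p Pi Pk] pp pi pk f by auto
    thus False using pi pk ij by simp
  qed
qed

lemma not_d_eta: assumes pp: "is_perm p" shows "\<not> contains_d (eta p)"
proof
  let ?x = "w1 (eta p)"
  assume "contains_d (eta p)"
  then obtain i where i: "1 \<le> i" "i < length p" "?x (i+1) < ?x i"
    and btw: "\<forall>m. 1 \<le> m \<and> m \<le> length p \<longrightarrow> \<not> (?x (i+1) < ?x m \<and> ?x m < ?x i)"
    and mn: "\<forall>m. 1 \<le> m \<and> m < i \<longrightarrow> ?x m \<noteq> ?x (i+1)"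
    and mx: "\<forall>m. i+1 < m \<and> m \<le> length p \<longrightarrow> ?x m \<noteq> ?x i"
    unfolding contains_d_def by auto
  define s where "s = pos p i"
  define t where "t = pos p (i+1)"
  have ps: "1 \<le> s \<and> s \<le> length p \<and> w1 p s = i" using pos_props[of p i] pp i unfolding s_def by auto
  have pt: "1 \<le> t \<and> t \<le> length p \<and> w1 p t = i+1" using pos_props[of p "i+1"] pp i unfolding t_def by auto
  have xs: "?x i = upsilon p s" "?x (i+1) = upsilon p t" using eta_w1v[of i p] eta_w1v[of "i+1" p] i unfolding s_def t_def by auto
  have "t < s" using ups_mono[of s t p] i xs by (cases "t < s") auto
  define r where "r = Suc t"
  define v where "v = w1 p r"
  have rr: "1 \<le> r" "r \<le> s" "r \<le> length p" using \<open>t < s\<close> ps unfolding r_def by auto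
  have vr: "1 \<le> v \<and> v \<le> length p" using perm_w1_range[of p r] pp rr unfolding v_def by auto
  have xv: "?x v = upsilon p r" using eta_w1[of p r] pp rr unfolding v_def by auto
  have st: "upsilon p t \<le> upsilon p r" "upsilon p r \<le> Suc (upsilon p t)" using ups_step[of p t] unfolding r_def by auto
  have fr: "upsilon p r = Suc (upsilon p t)"
  proof (rule ccontr)
    assume "upsilon p r \<noteq> Suc (upsilon p t)"
    hence e: "upsilon p t = upsilon p r" using st by auto
    hence "v < i+1" using block_dec[of p t r] pp pt rr unfolding v_def r_def by auto
    moreover have "v \<noteq> i" using xv xs e i by auto
    ultimately show False using mn vr xv xs e by auto
  qed
  have "upsilon p r \<le> upsilon p s" using ups_mono[of r s p] rr by auto
  hence frs: "upsilon p r = upsilon p s" using btw vr xv xs fr by fastforce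
  have "r = s"
  proof (rule ccontr)
    assume "r \<noteq> s"
    hence "r < s" using rr by auto
    hence "i < v" using block_dec[of p r s] pp rr ps frs unfolding v_def by auto
    moreover have "v \<noteq> i+1" using perm_w1_inj[of p r t] pp rr pt unfolding v_def r_def by auto
    ultimately show False using mx vr xv xs frs by auto
  qed
  have act: "eta_active p t" using ups_Suc[of p t] fr unfolding r_def by (cases "eta_active p t") auto
  have "etaJ p t = s" using pt i \<open>r = s\<close> ps unfolding etaJ_eq s_def by auto
  hence "\<not> etaJ p t < t" using \<open>t < s\<close> by auto
  moreover have "\<not> w1 p t < w1 p (t+1)" using pt ps \<open>r = s\<close> unfolding r_def by auto
  ultimately show False using act pt \<open>t < s\<close> unfolding eta_active_def by auto
qed

lemma not_c_eta: assumes pp: "is_perm p" shows "\<not> contains_c (eta p)"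
proof
  let ?x = "w1 (eta p)"
  assume "contains_c (eta p)"
  then obtain i j where ij: "1 \<le> i" "i < j" "j < length p" "?x (j+1) < ?x i" "?x i < ?x j"
    and btw: "\<forall>m. 1 \<le> m \<and> m \<le> length p \<longrightarrow> \<not> (?x (j+1) < ?x m \<and> ?x m < ?x i)"
    and mn: "\<forall>m. 1 \<le> m \<and> m \<le> j \<longrightarrow> ?x m \<noteq> ?x (j+1)"
    and mx: "\<forall>m. j+1 < m \<and> m \<le> length p \<longrightarrow> ?x m \<noteq> ?x i"
    unfolding contains_c_def by auto
  define s where "s = pos p i"
  define t where "t = pos p (j+1)"
  define q where "q = pos p j"
  have ps: "1 \<le> s \<and> s \<le> length p \<and> w1 p s = i" using pos_props[of p i] pp ij unfolding s_def by auto
  have pt: "1 \<le> t \<and> t \<le> length p \<and> w1 p t = j+1" using pos_props[of p "j+1"] pp ij unfolding t_def by auto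
  have pq: "1 \<le> q \<and> q \<le> length p \<and> w1 p q = j" using pos_props[of p j] pp ij unfolding q_def by auto
  have xs: "?x i = upsilon p s" "?x (j+1) = upsilon p t" "?x j = upsilon p q"
    using eta_w1v[of i p] eta_w1v[of "j+1" p] eta_w1v[of j p] ij unfolding s_def t_def q_def by auto
  have "t < s" using ups_mono[of s t p] ij xs by (cases "t < s") auto
  have "t < q" using ups_mono[of q t p] ij xs by (cases "t < q") auto
  define r where "r = Suc t"
  define v where "v = w1 p r"
  have rr: "1 \<le> r" "r \<le> s" "r \<le> length p" using \<open>t < s\<close> ps unfolding r_def by auto
  have vr: "1 \<le> v \<and> v \<le> length p" using perm_w1_range[of p r] pp rr unfolding v_def by auto
  have xv: "?x v = upsilon p r" using eta_w1[of p r] pp rr unfolding v_def by auto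
  have st: "upsilon p t \<le> upsilon p r" "upsilon p r \<le> Suc (upsilon p t)" using ups_step[of p t] unfolding r_def by auto
  have fr: "upsilon p r = Suc (upsilon p t)"
  proof (rule ccontr)
    assume "upsilon p r \<noteq> Suc (upsilon p t)"
    hence e: "upsilon p t = upsilon p r" using st by auto
    hence "v < j+1" using block_dec[of p t r] pp pt rr unfolding v_def r_def by auto
    thus False using mn vr xv xs e by auto
  qed
  have frs: "upsilon p r = upsilon p s" using btw vr xv xs fr ij by fastforce
  have "v \<noteq> j+1" using perm_w1_inj[of p r t] pp rr pt unfolding v_def r_def by auto
  hence "v < j+1" using mx vr xv xs frs by (cases "v < j+1") auto
  have act: "eta_active p t" using ups_Suc[of p t] fr unfolding r_def by (cases "eta_active p t") auto
  have "etaJ p t = q" using pt ij unfolding etaJ_eq q_def by auto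
  hence "\<not> etaJ p t < t" using \<open>t < q\<close> by auto
  moreover have "\<not> w1 p t < w1 p (t+1)" using pt \<open>v < j+1\<close> unfolding r_def v_def by auto
  ultimately show False using act pt \<open>t < s\<close> ps unfolding eta_active_def by auto
qed

lemma img_step:
  fixes g :: "nat \<Rightarrow> nat"
  assumes "g 1 = 1" "\<And>m. g m \<le> g (Suc m) \<and> g (Suc m) \<le> Suc (g m)"
  shows "1 \<le> m \<Longrightarrow> g ` {1..m} = {1..g m}"
proof (induction m)
  case 0 then show ?case by simp
next
  case (Suc m)
  show ?case
  proof (cases "m = 0")
    case True then show ?thesis using assms by simp
  next
    case False
    hence ih: "g ` {1..m} = {1..g m}" using Suc.IH by simp
    have "{1..Suc m} = insert (Suc m) {1..m}" by auto
    hence "g ` {1..Suc m} = insert (g (Suc m)) {1..g m}" using ih by simp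
    also have "\<dots> = {1..g (Suc m)}" using assms(2)[of m] False ih
      by (cases "g (Suc m) = g m") (auto simp: atLeastAtMostSuc_conv)
    finally show ?thesis .
  qed
qed

lemma cayley_eta: assumes pp: "is_perm p" shows "cayley (eta p)"
proof -
  have "set (eta p) = upsilon p ` {1..length p}"
  proof
    show "set (eta p) \<subseteq> upsilon p ` {1..length p}"
    proof
      fix y assume "y \<in> set (eta p)"
      then obtain k where k: "k < length p" "eta p ! k = y" by (auto simp: in_set_conv_nth)
      hence "y = w1 (eta p) (Suc k)" by (simp add: w1_def)
      hence "y = upsilon p (pos p (Suc k))" using eta_w1v[of "Suc k" p] k by simp
      thus "y \<in> upsilon p ` {1..length p}" using pos_props[of p "Suc k"] pp k by auto
    qed
  next
    show "upsilon p ` {1..length p} \<subseteq> set (eta p)"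
    proof
      fix y assume "y \<in> upsilon p ` {1..length p}"
      then obtain j where j: "1 \<le> j" "j \<le> length p" "y = upsilon p j" by auto
      hence "y = w1 (eta p) (w1 p j)" using eta_w1[of p j] pp by simp
      moreover have "1 \<le> w1 p j \<and> w1 p j \<le> length p" using perm_w1_range[of p j] pp j by auto
      ultimately show "y \<in> set (eta p)" unfolding w1_def by auto
    qed
  qed
  moreover have "length p \<noteq> 0 \<Longrightarrow> upsilon p ` {1..length p} = {1..upsilon p (length p)}"
    by (rule img_step) (use ups_1[of p] ups_step in \<open>auto simp: Suc_le_eq\<close>)
  ultimately show ?thesis unfolding cayley_def by (cases "length p = 0") auto
qed

lemma eta_in: "is_perm p \<Longrightarrow> eta p \<in> Cay_acd"
  unfolding Cay_acd_def using cayley_eta not_a_eta not_c_eta not_d_eta by auto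



definition keyf :: "nat list \<Rightarrow> nat \<Rightarrow> nat" where
  "keyf x v = w1 x v * (length x + 1) + (length x - v)"

lemma lex_lt:
  fixes a b c d N :: nat
  assumes "c < N" "d < N"
  shows "(a * N + c < b * N + d) = (a < b \<or> (a = b \<and> c < d))"
proof (cases "a < b")
  case True
  have "(a+1) * N \<le> b * N" using True by (intro mult_le_mono1) simp
  then show ?thesis using True assms by (simp add: algebra_simps)
next
  case False
  show ?thesis
  proof (cases "a = b")
    case True then show ?thesis by simp
  next
    case False2: False
    hence "b < a" using False by simp
    hence "(b+1) * N \<le> a * N" by (intro mult_le_mono1) simp
    then show ?thesis using False False2 assms by (simp add: algebra_simps)
  qed
qed

lemma key_lt:
  assumes "1 \<le> u" "u \<le> length x" "1 \<le> v" "v \<le> length x"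
  shows "keyf x u < keyf x v \<longleftrightarrow> (w1 x u < w1 x v \<or> (w1 x u = w1 x v \<and> v < u))"
proof -
  have "keyf x u < keyf x v \<longleftrightarrow> (w1 x u < w1 x v \<or> (w1 x u = w1 x v \<and> length x - u < length x - v))"
    unfolding keyf_def by (rule lex_lt) auto
  also have "(length x - u < length x - v) = (v < u)" using assms by auto
  finally show ?thesis .
qed

lemma key_inj: "inj_on (keyf x) {1..length x}"
proof (rule inj_onI)
  fix u v assume a: "u \<in> {1..length x}" "v \<in> {1..length x}" "keyf x u = keyf x v"
  show "u = v"
  proof (rule ccontr)
    assume "u \<noteq> v"
    hence "u < v \<or> v < u" by auto
    thus False using key_lt[of u x v] key_lt[of v x u] a by auto
  qed
qed

definition dec :: "nat list \<Rightarrow> nat list" where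
  "dec x = sort_key (keyf x) [1..<length x + 1]"

lemma dec_perm: "is_perm (dec x) \<and> length (dec x) = length x"
  unfolding dec_def is_perm_def by (simp del: upt_Suc add: atLeastLessThanSuc_atLeastAtMost)

lemma dec_sorted: "sorted_wrt (<) (map (keyf x) (dec x))"
proof -
  have "set (dec x) = {1..length x}" using dec_perm[of x] unfolding is_perm_def by simp
  hence "distinct (map (keyf x) (dec x))" using dec_perm[of x] key_inj[of x]
    unfolding is_perm_def by (simp add: distinct_map)
  thus ?thesis unfolding strict_sorted_iff dec_def by simp
qed

lemma sorted_nth_w1:
  fixes f :: "nat \<Rightarrow> nat"
  assumes "sorted_wrt (<) (map f p)" "1 \<le> a" "a < b" "b \<le> length p"
  shows "f (w1 p a) < f (w1 p b)"
proof -
  have "(map f p) ! (a-1) < (map f p) ! (b-1)"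
    by (rule sorted_wrt_nth_less[OF assms(1)]) (use assms in auto)
  thus ?thesis using assms unfolding w1_def by simp
qed

lemma sorted_rev_w1:
  fixes f :: "nat \<Rightarrow> nat"
  assumes "sorted_wrt (<) (map f p)" "1 \<le> a" "a \<le> length p" "1 \<le> b" "b \<le> length p"
    "f (w1 p a) < f (w1 p b)"
  shows "a < b"
proof (rule ccontr)
  assume "\<not> a < b"
  hence "b = a \<or> b < a" by auto
  thus False
  proof
    assume "b < a"
    hence "f (w1 p b) < f (w1 p a)" using sorted_nth_w1[OF assms(1), of b a] assms by simp
    thus False using assms(6) by simp
  qed (use assms(6) in simp)
qed

locale D =
  fixes x :: "nat list" and k :: nat
  assumes setx: "set x = {1..k}" and na: "\<not> contains_a x" and nc: "\<not> contains_c x" and nd: "\<not> contains_d x"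
begin

abbreviation "n \<equiv> length x"
abbreviation "q \<equiv> dec x"
abbreviation "xx \<equiv> w1 x"
abbreviation "key \<equiv> keyf x"

lemma qperm: "is_perm q" and qlen: "length q = n" using dec_perm[of x] by auto

lemma xrange: "1 \<le> v \<Longrightarrow> v \<le> n \<Longrightarrow> 1 \<le> xx v \<and> xx v \<le> k"
proof -
  assume "1 \<le> v" "v \<le> n"
  hence "x ! (v-1) \<in> set x" by simp
  thus ?thesis using setx unfolding w1_def by auto
qed

lemma xsurj: "1 \<le> y \<Longrightarrow> y \<le> k \<Longrightarrow> \<exists>v. 1 \<le> v \<and> v \<le> n \<and> xx v = y"
proof -
  assume "1 \<le> y" "y \<le> k"
  hence "y \<in> set x" using setx by auto
  then obtain i where "i < n" "x ! i = y" by (auto simp: in_set_conv_nth)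
  thus ?thesis by (intro exI[of _ "Suc i"]) (auto simp: w1_def)
qed

lemma qrange: "1 \<le> a \<Longrightarrow> a \<le> n \<Longrightarrow> 1 \<le> w1 q a \<and> w1 q a \<le> n"
  using perm_w1_range[OF qperm, of a] qlen by simp

lemma qlt: "1 \<le> a \<Longrightarrow> a < b \<Longrightarrow> b \<le> n \<Longrightarrow> key (w1 q a) < key (w1 q b)"
  using sorted_nth_w1[OF dec_sorted[of x], of a b] qlen by simp

lemma qrev: "1 \<le> a \<Longrightarrow> a \<le> n \<Longrightarrow> 1 \<le> b \<Longrightarrow> b \<le> n \<Longrightarrow> key (w1 q a) < key (w1 q b) \<Longrightarrow> a < b"
  using sorted_rev_w1[OF dec_sorted[of x], of a b] qlen by simp

lemma qle_x: "1 \<le> a \<Longrightarrow> a \<le> b \<Longrightarrow> b \<le> n \<Longrightarrow> xx (w1 q a) \<le> xx (w1 q b)"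
proof -
  assume a: "1 \<le> a" "a \<le> b" "b \<le> n"
  show ?thesis
  proof (cases "a = b")
    case False
    hence "key (w1 q a) < key (w1 q b)" using qlt a by simp
    thus ?thesis using key_lt[of "w1 q a" x "w1 q b"] qrange[of a] qrange[of b] a by auto
  qed simp
qed

lemma qpos: "1 \<le> v \<Longrightarrow> v \<le> n \<Longrightarrow> \<exists>r. 1 \<le> r \<and> r \<le> n \<and> w1 q r = v"
  using perm_w1_surj[OF qperm, of v] qlen by simp

lemma base: "1 \<le> n \<Longrightarrow> xx (w1 q 1) = 1"
proof (rule ccontr)
  assume a: "1 \<le> n" "xx (w1 q 1) \<noteq> 1"
  have r1: "1 \<le> w1 q 1 \<and> w1 q 1 \<le> n" using qrange[of 1] a by simp
  hence "1 < xx (w1 q 1)" "xx (w1 q 1) \<le> k" using xrange[of "w1 q 1"] a by auto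
  then obtain v where v: "1 \<le> v" "v \<le> n" "xx v = 1" using xsurj[of 1] by auto
  then obtain r where r: "1 \<le> r" "r \<le> n" "w1 q r = v" using qpos by blast
  have "key v < key (w1 q 1)" using key_lt[of v x "w1 q 1"] v r1 \<open>1 < xx (w1 q 1)\<close> by auto
  hence "r < 1" using qrev[of r 1] r a by simp
  thus False using r by simp
qed

lemma step:
  assumes s: "1 \<le> s" "Suc s \<le> n" and IH: "upsilon q s = xx (w1 q s)"
  shows "upsilon q (Suc s) = xx (w1 q (Suc s))"
proof -
  define u where "u = w1 q s"
  define w where "w = w1 q (Suc s)"
  define b where "b = xx u"
  have ur: "1 \<le> u \<and> u \<le> n" using qrange[of s] s unfolding u_def by simp
  have wr: "1 \<le> w \<and> w \<le> n" using qrange[of "Suc s"] s unfolding w_def by simp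
  have kuw: "key u < key w" using qlt[of s "Suc s"] s unfolding u_def w_def by simp
  have "b \<le> xx w" using qle_x[of s "Suc s"] s unfolding u_def w_def b_def by simp
  have "xx w \<le> b + 1"
  proof (rule ccontr)
    assume "\<not> xx w \<le> b + 1"
    hence "b + 1 \<le> k" using xrange[of w] wr by auto
    then obtain v where v: "1 \<le> v" "v \<le> n" "xx v = b + 1" using xsurj[of "b+1"] by auto
    then obtain r where r: "1 \<le> r" "r \<le> n" "w1 q r = v" using qpos by blast
    have "key u < key v" using key_lt[of u x v] ur v unfolding b_def by auto
    hence "s < r" using qrev[of s r] r s unfolding u_def by simp
    have "key v < key w" using key_lt[of v x w] wr v \<open>\<not> xx w \<le> b + 1\<close> by auto
    hence "r < Suc s" using qrev[of r "Suc s"] r s unfolding w_def by simp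
    thus False using \<open>s < r\<close> by simp
  qed
  have uw: "u \<noteq> w" using perm_w1_inj[OF qperm, of s "Suc s"] s qlen unfolding u_def w_def by auto
  show ?thesis
  proof (cases "xx w = b")
    case True
    have "w < u" using key_lt[of u x w] kuw ur wr True unfolding b_def by auto
    have "\<not> eta_active q s"
    proof
      assume act: "eta_active q s"
      have "u \<noteq> 1" using \<open>w < u\<close> wr by auto
      have "etaJ q s < s" using act s qlen \<open>w < u\<close> unfolding eta_active_def u_def w_def by auto
      hence lt: "pos q (u - 1) < s" using \<open>u \<noteq> 1\<close> unfolding etaJ_eq u_def by auto
      have u1: "1 \<le> u - 1" "u - 1 \<le> n" using ur \<open>u \<noteq> 1\<close> by auto
      define r where "r = pos q (u - 1)"
      have r: "1 \<le> r \<and> r \<le> n \<and> w1 q r = u - 1" using pos_props[OF qperm, of "u-1"] u1 qlen unfolding r_def by simp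
      have "key (u - 1) < key u" using qlt[of r s] r lt s unfolding r_def u_def by simp
      hence xu1: "xx (u-1) < b" using key_lt[of "u-1" x u] u1 ur unfolding b_def by auto
      have "w \<noteq> u - 1" using xu1 True by auto
      hence "w < u - 1" using \<open>w < u\<close> by auto
      have uu: "u - 1 + 1 = u" using ur by auto
      have "contains_a x" unfolding contains_a_def
      proof (rule exI[of _ w], rule exI[of _ "u-1"], intro conjI)
        show "1 \<le> w" using wr by simp
        show "w < u - 1" by fact
        show "u - 1 < n" using ur by linarith
        show "xx (u - 1) < xx w" using xu1 True by simp
        show "xx w = xx (u - 1 + 1)" using uu True unfolding b_def by simp
      qed
      thus False using na by simp
    qed
    hence "upsilon q (Suc s) = upsilon q s" using ups_Suc[of q s] by simp
    thus ?thesis using IH True unfolding b_def u_def w_def by simp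
  next
    case False
    hence xw: "xx w = b + 1" using \<open>b \<le> xx w\<close> \<open>xx w \<le> b + 1\<close> by auto
    have "eta_active q s"
    proof (rule ccontr)
      assume nact: "\<not> eta_active q s"
      have nasc: "\<not> u < w" using nact s qlen unfolding eta_active_def u_def w_def by auto
      hence "w < u" using uw by auto
      have "u \<noteq> 1" using \<open>w < u\<close> wr by auto
      have nj: "\<not> etaJ q s < s" using nact s qlen unfolding eta_active_def by auto
      have u1: "1 \<le> u - 1" "u - 1 \<le> n" using ur \<open>u \<noteq> 1\<close> by auto
      define r where "r = pos q (u - 1)"
      have r: "1 \<le> r \<and> r \<le> n \<and> w1 q r = u - 1" using pos_props[OF qperm, of "u-1"] u1 qlen unfolding r_def by simp
      have "s \<le> r" using nj \<open>u \<noteq> 1\<close> unfolding etaJ_eq u_def r_def by auto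
      moreover have "r \<noteq> s" using r \<open>u \<noteq> 1\<close> ur unfolding u_def by auto
      ultimately have "Suc s \<le> r" by auto
      hence xu1: "b + 1 \<le> xx (u - 1)" using qle_x[of "Suc s" r] r xw unfolding w_def by simp
      have H1: "\<forall>m. 1 \<le> m \<and> m < u \<longrightarrow> xx m \<noteq> b"
      proof (intro allI impI)
        fix m assume m: "1 \<le> m \<and> m < u"
        show "xx m \<noteq> b"
        proof
          assume xm: "xx m = b"
          have mr: "1 \<le> m" "m \<le> n" using m ur by auto
          obtain rm where rm: "1 \<le> rm" "rm \<le> n" "w1 q rm = m" using qpos[of m] mr by blast
          have "key u < key m" using key_lt[of u x m] mr ur m xm unfolding b_def by auto
          hence "s < rm" using qrev[of s rm] rm s unfolding u_def by simp
          moreover have "rm \<noteq> Suc s" using rm xm xw unfolding w_def by auto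
          ultimately have "Suc s \<le> rm" by auto
          hence "xx w \<le> xx m" using qle_x[of "Suc s" rm] rm unfolding w_def by simp
          thus False using xm xw by simp
        qed
      qed
      have H2: "\<forall>m. w < m \<and> m \<le> n \<longrightarrow> xx m \<noteq> b + 1"
      proof (intro allI impI)
        fix m assume m: "w < m \<and> m \<le> n"
        show "xx m \<noteq> b + 1"
        proof
          assume xm: "xx m = b + 1"
          have mr: "1 \<le> m" "m \<le> n" using m wr by auto
          obtain rm where rm: "1 \<le> rm" "rm \<le> n" "w1 q rm = m" using qpos[of m] mr by blast
          have "key m < key w" using key_lt[of m x w] mr wr m xm xw by auto
          hence "rm < Suc s" using qrev[of rm "Suc s"] rm s unfolding w_def by simp
          hence "xx m \<le> xx u" using qle_x[of rm s] rm s unfolding u_def by simp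
          thus False using xm unfolding b_def by simp
        qed
      qed
      have uu: "u - 1 + 1 = u" using ur by auto
      show False
      proof (cases "u - 1 = w")
        case True
        have wu: "w + 1 = u" using True uu by simp
        have "contains_d x" unfolding contains_d_def
        proof (intro exI[of _ w] conjI allI impI)
          show "1 \<le> w" using wr by simp
          show "w < n" using wu ur by linarith
          show "xx (w + 1) < xx w" using wu xw unfolding b_def by simp
        next
          fix m assume "1 \<le> m \<and> m \<le> n"
          show "\<not> (xx (w + 1) < xx m \<and> xx m < xx w)" using wu xw unfolding b_def by simp
        next
          fix m assume "1 \<le> m \<and> m < w"
          thus "xx m \<noteq> xx (w + 1)" using H1 wu \<open>w < u\<close> unfolding b_def by simp
        next
          fix m assume "w + 1 < m \<and> m \<le> n"
          thus "xx m \<noteq> xx w" using H2 xw by simp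
        qed
        thus False using nd by simp
      next
        case False
        hence "w < u - 1" using \<open>w < u\<close> by auto
        hence "xx (u-1) \<noteq> b + 1" using H2 u1 by auto
        hence "b + 1 < xx (u - 1)" using xu1 by auto
        have "contains_c x" unfolding contains_c_def
        proof (rule exI[of _ w], rule exI[of _ "u-1"], intro conjI allI impI)
          show "1 \<le> w" using wr by simp
          show "w < u - 1" by fact
          show "u - 1 < n" using ur by linarith
          show "xx (u - 1 + 1) < xx w" using uu xw unfolding b_def by simp
          show "xx w < xx (u - 1)" using xw \<open>b + 1 < xx (u - 1)\<close> by simp
        next
          fix m assume "1 \<le> m \<and> m \<le> n"
          show "\<not> (xx (u - 1 + 1) < xx m \<and> xx m < xx w)" using uu xw unfolding b_def by simp
        next
          fix m assume "1 \<le> m \<and> m \<le> u - 1"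
          hence "1 \<le> m \<and> m < u" using ur by auto
          thus "xx m \<noteq> xx (u - 1 + 1)" using H1 uu unfolding b_def by simp
        next
          fix m assume "u - 1 + 1 < m \<and> m \<le> n"
          hence "w < m \<and> m \<le> n" using uu \<open>w < u\<close> by simp
          thus "xx m \<noteq> xx w" using H2 xw by simp
        qed
        thus False using nc by simp
      qed
    qed
    hence "upsilon q (Suc s) = upsilon q s + 1" using ups_Suc[of q s] by simp
    thus ?thesis using IH xw unfolding b_def u_def w_def by simp
  qed
qed

lemma ups_q: "1 \<le> s \<Longrightarrow> s \<le> n \<Longrightarrow> upsilon q s = xx (w1 q s)"
proof (induction s)
  case 0 then show ?case by simp
next
  case (Suc s)
  show ?case
  proof (cases "s = 0")
    case True then show ?thesis using base ups_1[of q] Suc.prems by simp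
  next
    case False then show ?thesis using step[of s] Suc by simp
  qed
qed

lemma eta_q: "eta q = x"
proof (rule nth_equalityI)
  show "length (eta q) = length x" using qlen by simp
next
  fix i assume "i < length (eta q)"
  hence i: "i < n" using qlen by simp
  have "eta q ! i = w1 (eta q) (Suc i)" by (simp add: w1_def)
  also have "\<dots> = upsilon q (pos q (Suc i))" using eta_w1v[of "Suc i" q] i qlen by simp
  also have "\<dots> = xx (w1 q (pos q (Suc i)))" using ups_q pos_props[OF qperm, of "Suc i"] i qlen by simp
  also have "\<dots> = xx (Suc i)" using pos_props[OF qperm, of "Suc i"] i qlen by simp
  finally show "eta q ! i = x ! i" by (simp add: w1_def)
qed

end

lemma Cay_acd_sub: "x \<in> Cay_acd \<Longrightarrow> is_perm (dec x) \<and> eta (dec x) = x"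
proof -
  assume "x \<in> Cay_acd"
  then obtain k where "D x k" unfolding Cay_acd_def cayley_def D_def by auto
  thus ?thesis using D.eta_q dec_perm by auto
qed

lemma sorted_by_key: assumes pp: "is_perm p" shows "sorted_wrt (<) (map (keyf (eta p)) p)"
proof -
  have "\<forall>i. Suc i < length p \<longrightarrow> keyf (eta p) (p ! i) < keyf (eta p) (p ! Suc i)"
  proof (intro allI impI)
    fix i assume i: "Suc i < length p"
    define s where "s = Suc i"
    have e1: "p ! i = w1 p s" "p ! Suc i = w1 p (Suc s)" unfolding s_def w1_def by auto
    have r1: "1 \<le> w1 p s \<and> w1 p s \<le> length p" using perm_w1_range[OF pp, of s] i unfolding s_def by auto
    have r2: "1 \<le> w1 p (Suc s) \<and> w1 p (Suc s) \<le> length p" using perm_w1_range[OF pp, of "Suc s"] i unfolding s_def by auto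
    have x1: "w1 (eta p) (w1 p s) = upsilon p s" using eta_w1[OF pp, of s] i unfolding s_def by auto
    have x2: "w1 (eta p) (w1 p (Suc s)) = upsilon p (Suc s)" using eta_w1[OF pp, of "Suc s"] i unfolding s_def by auto
    have "upsilon p s < upsilon p (Suc s) \<or> (upsilon p s = upsilon p (Suc s) \<and> w1 p (Suc s) < w1 p s)"
      using ups_step[of p s] block_dec[OF pp, of s "Suc s"] i unfolding s_def by auto
    thus "keyf (eta p) (p ! i) < keyf (eta p) (p ! Suc i)"
      unfolding e1 using key_lt[of "w1 p s" "eta p" "w1 p (Suc s)"] r1 r2 x1 x2 by auto
  qed
  thus ?thesis by (subst sorted_wrt_iff_nth_Suc_transp) auto
qed

lemma eta_inj: assumes "is_perm p1" "is_perm p2" "eta p1 = eta p2" shows "p1 = p2"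
proof -
  have len: "length p1 = length p2" using assms(3) length_eta by metis
  define x where "x = eta p1"
  have s1: "sorted_wrt (<) (map (keyf x) p1)" using sorted_by_key[OF assms(1)] unfolding x_def .
  have s2: "sorted_wrt (<) (map (keyf x) p2)" using sorted_by_key[OF assms(2)] assms(3) unfolding x_def by simp
  have st: "set p1 = set p2" using assms(1,2) len unfolding is_perm_def by simp
  have "map (keyf x) p1 = map (keyf x) p2"
    using s1 s2 st unfolding strict_sorted_iff by (intro sorted_distinct_set_unique) auto
  moreover have "inj_on (keyf x) (set p1 \<union> set p2)" using key_inj[of x] assms(1) st unfolding x_def is_perm_def by simp
  ultimately show ?thesis using inj_on_map_eq_map by blast
qed


lemma contains_11_iff: "contains_11 x \<longleftrightarrow> \<not> distinct x"
proof
  assume "contains_11 x"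
  then obtain i j where ij: "1 \<le> i" "i < j" "j \<le> length x" "x ! (i-1) = x ! (j-1)"
    unfolding contains_11_def w1_def by auto
  have "i - 1 < length x" "j - 1 < length x" "i - 1 \<noteq> j - 1" using ij by auto
  thus "\<not> distinct x" using ij(4) unfolding distinct_conv_nth by blast
next
  assume "\<not> distinct x"
  then obtain i j where ij: "i < length x" "j < length x" "i \<noteq> j" "x ! i = x ! j"
    unfolding distinct_conv_nth by auto
  show "contains_11 x"
  proof (cases "i < j")
    case True
    have "1 \<le> Suc i \<and> Suc i < Suc j \<and> Suc j \<le> length x \<and> x ! (Suc i - 1) = x ! (Suc j - 1)" using ij True by auto
    thus ?thesis unfolding contains_11_def w1_def by blast
  next
    case False
    hence "j < i" using ij by auto
    have "1 \<le> Suc j \<and> Suc j < Suc i \<and> Suc i \<le> length x \<and> x ! (Suc j - 1) = x ! (Suc i - 1)" using ij \<open>j < i\<close> by auto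
    thus ?thesis unfolding contains_11_def w1_def by blast
  qed
qed

lemma perms_eq: "{p. is_perm p \<and> length p = n} = permutations_of_set {1..n}"
proof -
  have "is_perm p \<and> length p = n \<longleftrightarrow> distinct p \<and> set p = {1..n}" for p
  proof
    assume "distinct p \<and> set p = {1..n}"
    moreover hence "length p = n" using distinct_card[of p] by simp
    ultimately show "is_perm p \<and> length p = n" unfolding is_perm_def by simp
  qed (auto simp: is_perm_def)
  thus ?thesis unfolding permutations_of_set_def by auto
qed

lemma cay11_eq: "Cay_n_11 n = permutations_of_set {1..n}"
proof -
  have "(cayley x \<and> length x = n \<and> distinct x) \<longleftrightarrow> distinct x \<and> set x = {1..n}" for x
  proof
    assume a: "cayley x \<and> length x = n \<and> distinct x"
    then obtain k where k: "set x = {1..k}" unfolding cayley_def by auto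
    have "k = n" using distinct_card[of x] a k by simp
    thus "distinct x \<and> set x = {1..n}" using a k by simp
  next
    assume a: "distinct x \<and> set x = {1..n}"
    hence "length x = n" using distinct_card[of x] by simp
    thus "cayley x \<and> length x = n \<and> distinct x" using a unfolding cayley_def by auto
  qed
  thus ?thesis unfolding Cay_n_11_def Cay_def permutations_of_set_def contains_11_iff by auto
qed

lemma X_eq: "X = Cay_acd"
proof
  show "X \<subseteq> Cay_acd" unfolding X_def using eta_in by auto
next
  show "Cay_acd \<subseteq> X"
  proof
    fix x assume "x \<in> Cay_acd"
    hence "is_perm (dec x) \<and> eta (dec x) = x" by (rule Cay_acd_sub)
    thus "x \<in> X" unfolding X_def by (intro CollectI exI[of _ "dec x"]) auto
  qed
qed

lemma acd_img: "Cay_n_acd n = eta ` {p. is_perm p \<and> length p = n}"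
proof -
  have "Cay_n_acd n = {x \<in> Cay_acd. length x = n}"
    unfolding Cay_n_acd_def Cay_def Cay_acd_def by auto
  also have "\<dots> = {x \<in> X. length x = n}" using X_eq by simp
  also have "\<dots> = eta ` {p. is_perm p \<and> length p = n}" unfolding X_def by auto
  finally show ?thesis .
qed

theorem theorem7p5:
  shows "X = Cay_acd \<and>
         (\<forall>n. card (Cay_n_acd n) = card (Cay_n_11 n) \<and> card (Cay_n_11 n) = fact n)"
proof (intro conjI allI)
  show "X = Cay_acd" by (rule X_eq)
next
  fix n
  have inj: "inj_on eta {p. is_perm p \<and> length p = n}" by (rule inj_onI) (auto intro: eta_inj)
  have "card (Cay_n_acd n) = card {p. is_perm p \<and> length p = n}"
    unfolding acd_img using card_image[OF inj] .
  also have "\<dots> = card (Cay_n_11 n)" unfolding perms_eq cay11_eq ..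
  finally show "card (Cay_n_acd n) = card (Cay_n_11 n)" .
  show "card (Cay_n_11 n) = fact n" unfolding cay11_eq by simp
qed

end
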